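(* Consider the private information delivery (PID) problem with $K$ messages, $N$ servers and $M$ messages stored per server, where $1\le M\le K$, $K/M\notin\mathbb{Z}$, and $$\lceil K/M \rceil < N < \frac{K}{\gcd(K,M)} - \left(\frac{M}{\gcd(K,M)}-1\right)\left(\lfloor K/M \rfloor - 1\right).$$ Then the capacity satisfies $$C \geq \frac{l}{N + (l-1)(\lfloor K/M \rfloor - 1)},\qquad\text{where } l = \left\lfloor \frac{(N - \lfloor K/M \rfloor + 1)M}{K - (\lfloor K/M \rfloor - 1) M} \right\rfloor.$$
   Context: The PID problem with parameters $(K,N,M)$: There are $K$ independent messages $W_1,\dots,W_K$, each consisting of $L$ i.i.d. uniform symbols from a finite field $\mathbb{F}_p$, so that (in $p$-ary units) $H(W_k)=L$ for all $k$ and $H(W_1,\dots,W_K)=\sum_k H(W_k)$. There are $N$ servers; server $n$ stores $S_n=\{W_k : k\in\mathcal{S}_n\}$ for some $\mathcal{S}_n\subset\{1,\dots,K\}$ with $|\mathcal{S}_n|=M$ (a design choice). The servers share a common random variable $Z$ independent of the messages. For each $k\in\{1,\dots,K\}$, server $n$ sends an answer $A_n^{[k]}$ that is a deterministic function of $(S_n,Z)$ and consists of $D_n$ symbols of $\mathbb{F}_p$ ($D_n$ independent of $k$). Correctness: $H(W_k\mid A_1^{[k]},\dots,A_N^{[k]})=0$ for all $k$. Privacy: for all $k$, $(A_1^{[1]},\dots,A_N^{[1]},W_1)$ and $(A_1^{[k]},\dots,A_N^{[k]},W_k)$ are identically distributed. The rate is $R=L/\sum_n D_n$; a rate is achievable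 if some scheme (choice of $L$, $p$, storage sets, $Z$, answer functions) satisfying these constraints has rate at least $R$; the capacity $C$ is the supremum of achievable rates over all storage designs and schemes. *)

theory Defs
  imports "HOL-Probability.Probability" "HOL-Computational_Algebra.Primes"
begin

(* Messages W_1..W_K (0-indexed as k < K), each a string of L symbols of F_p,
   represented as w k i \<in> {0..<p} for k < K, i < L (extensional elsewhere). *)
definition msg_space :: "nat \<Rightarrow> nat \<Rightarrow> nat \<Rightarrow> (nat \<Rightarrow> nat \<Rightarrow> nat) set" where
  "msg_space p K L = {w. \<forall>k i. (k < K \<and> i < L \<longrightarrow> w k i < p) \<and>
                              (\<not> (k < K \<and> i < L) \<longrightarrow> w k i = 0)}"

definition pid_joint :: "nat \<Rightarrow> nat \<Rightarrow> nat \<Rightarrow> nat pmf \<Rightarrow> ((nat \<Rightarrow> nat \<Rightarrow> nat) \<times> nat) pmf" where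
  "pid_joint p K L Z = pair_pmf (pmf_of_set (msg_space p K L)) Z"

definition pid_answers ::
  "nat \<Rightarrow> (nat \<Rightarrow> nat \<Rightarrow> (nat \<Rightarrow> nat \<Rightarrow> nat) \<Rightarrow> nat \<Rightarrow> nat list) \<Rightarrow> nat
     \<Rightarrow> (nat \<Rightarrow> nat \<Rightarrow> nat) \<Rightarrow> nat \<Rightarrow> nat list list" where
  "pid_answers N A k w z = map (\<lambda>n. A k n w z) [0..<N]"

(* A PID scheme: field size p (prime), message length L, storage sets S n (n < N),
   common randomness Z, answer functions A k n (desired message k, server n),
   answer lengths D n. *)
definition pid_scheme ::
  "nat \<Rightarrow> nat \<Rightarrow> nat \<Rightarrow> nat \<Rightarrow> nat \<Rightarrow> (nat \<Rightarrow> nat set) \<Rightarrow> nat pmf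
     \<Rightarrow> (nat \<Rightarrow> nat \<Rightarrow> (nat \<Rightarrow> nat \<Rightarrow> nat) \<Rightarrow> nat \<Rightarrow> nat list) \<Rightarrow> (nat \<Rightarrow> nat) \<Rightarrow> bool" where
  "pid_scheme K N M p L S Z A D \<longleftrightarrow>
     prime p \<and>
     (\<forall>n<N. S n \<subseteq> {..<K} \<and> card (S n) = M) \<and>
     \<comment> \<open>answer of server n is a deterministic function of (S_n, Z)\<close>
     (\<forall>k<K. \<forall>n<N. \<forall>w w' z. (\<forall>j\<in>S n. w j = w' j) \<longrightarrow> A k n w z = A k n w' z) \<and>
     \<comment> \<open>answer of server n consists of D_n symbols of F_p, independent of k\<close>
     (\<forall>k<K. \<forall>n<N. \<forall>w z. length (A k n w z) = D n \<and> (\<forall>x\<in>set (A k n w z). x < p)) \<and>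
     \<comment> \<open>correctness: H(W_k | A_1^[k],...,A_N^[k]) = 0\<close>
     (\<forall>k<K. \<forall>x\<in>set_pmf (pid_joint p K L Z). \<forall>y\<in>set_pmf (pid_joint p K L Z).
         pid_answers N A k (fst x) (snd x) = pid_answers N A k (fst y) (snd y)
           \<longrightarrow> fst x k = fst y k) \<and>
     \<comment> \<open>privacy: (A^[1], W_1) and (A^[k], W_k) identically distributed\<close>
     (\<forall>k<K. map_pmf (\<lambda>(w, z). (pid_answers N A k w z, w k)) (pid_joint p K L Z) =
             map_pmf (\<lambda>(w, z). (pid_answers N A 0 w z, w 0)) (pid_joint p K L Z))"

definition pid_capacity :: "nat \<Rightarrow> nat \<Rightarrow> nat \<Rightarrow> ereal" where
  "pid_capacity K N M =
     Sup {ereal (real L / real (\<Sum>n<N. D n)) | p L S Z A D. pid_scheme K N M p L S Z A D}"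

end

theory Submission imports Defs "HOL-Computational_Algebra.Polynomial" "HOL-Library.Countable" begin

lemma vand_inj:
  fixes J :: "'a set" and xx :: "'a \<Rightarrow> nat"
  assumes p: "prime p" and fin: "finite J" and cardJ: "card J \<le> L"
    and inj: "inj_on xx J" and lt: "\<forall>j\<in>J. xx j < p"
    and a: "\<forall>j\<in>J. a j < p" and b: "\<forall>j\<in>J. b j < p"
    and eq: "\<forall>m<L. (\<Sum>j\<in>J. a j * xx j ^ m) mod p = (\<Sum>j\<in>J. b j * xx j ^ m) mod p"
    and j0: "j0 \<in> J"
  shows "a j0 = b j0"
proof -
  define q :: "int poly" where "q = (\<Prod>t\<in>J-{j0}. [:- int (xx t), 1:])"
  have "degree q \<le> (\<Sum>t\<in>J-{j0}. degree [:- int (xx t), 1:])"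
    unfolding q_def using degree_prod_sum_le[of "J-{j0}" "\<lambda>t. [:- int (xx t), 1:]"] fin by (simp add: o_def)
  also have "\<dots> = card (J - {j0})" by simp
  also have "\<dots> < L" using cardJ j0 fin
    by (metis card_Diff1_less dual_order.strict_trans1)
  finally have degq: "degree q < L" .
  have pi: "prime (int p)" using p by simp
  have dv: "int p dvd (\<Sum>j\<in>J. (int (a j) - int (b j)) * int (xx j) ^ m)" if "m < L" for m
  proof -
    have "int (\<Sum>j\<in>J. a j * xx j ^ m) mod int p = int (\<Sum>j\<in>J. b j * xx j ^ m) mod int p"
      using eq that by (metis of_nat_mod)
    hence "int p dvd (int (\<Sum>j\<in>J. a j * xx j ^ m) - int (\<Sum>j\<in>J. b j * xx j ^ m))"
      by (simp add: mod_eq_dvd_iff)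
    also have "int (\<Sum>j\<in>J. a j * xx j ^ m) - int (\<Sum>j\<in>J. b j * xx j ^ m)
        = (\<Sum>j\<in>J. (int (a j) - int (b j)) * int (xx j) ^ m)"
      by (simp add: sum_subtractf left_diff_distrib)
    finally show ?thesis .
  qed
  have "(\<Sum>j\<in>J. (int (a j) - int (b j)) * poly q (int (xx j)))
      = (\<Sum>i\<le>degree q. coeff q i * (\<Sum>j\<in>J. (int (a j) - int (b j)) * int (xx j) ^ i))"
    by (simp add: poly_altdef sum_distrib_left sum_distrib_right sum.swap[of _ J] mult_ac)
  moreover have "int p dvd (\<Sum>i\<le>degree q. coeff q i * (\<Sum>j\<in>J. (int (a j) - int (b j)) * int (xx j) ^ i))"
  proof (rule dvd_sum)
    fix i assume "i \<in> {..degree q}"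
    hence "i < L" using degq by auto
    thus "int p dvd coeff q i * (\<Sum>j\<in>J. (int (a j) - int (b j)) * int (xx j) ^ i)"
      using dv by (intro dvd_mult) auto
  qed
  ultimately have dv2: "int p dvd (\<Sum>j\<in>J. (int (a j) - int (b j)) * poly q (int (xx j)))"
    by simp
  have z: "poly q (int (xx j)) = 0" if "j \<in> J" "j \<noteq> j0" for j
    unfolding q_def poly_prod using that fin
    by (auto intro!: prod_zero bexI[of _ j])
  have "(\<Sum>j\<in>J. (int (a j) - int (b j)) * poly q (int (xx j)))
      = (int (a j0) - int (b j0)) * poly q (int (xx j0))"
    using z fin j0 by (subst sum.remove[of J j0]) (auto intro!: sum.neutral)
  with dv2 have dv3: "int p dvd (int (a j0) - int (b j0)) * poly q (int (xx j0))" by simp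
  have ndv: "\<not> int p dvd poly q (int (xx j0))"
  proof
    assume "int p dvd poly q (int (xx j0))"
    hence "int p dvd (\<Prod>t\<in>J-{j0}. int (xx j0) - int (xx t))"
      unfolding q_def poly_prod by simp
    then obtain t where t: "t \<in> J - {j0}" "int p dvd int (xx j0) - int (xx t)"
      using pi fin by (auto simp: prime_dvd_prod_iff)
    have ne: "int (xx j0) - int (xx t) \<noteq> 0" using inj t j0 by (auto dest: inj_onD)
    have "\<bar>int (xx j0) - int (xx t)\<bar> < int p" using lt t j0 by (cases "xx j0 \<le> xx t") auto
    with dvd_imp_le_int[OF ne t(2)] show False by simp
  qed
  have "int p dvd int (a j0) - int (b j0)" using dv3 ndv pi
    by (simp add: prime_dvd_mult_iff)
  moreover have "\<bar>int (a j0) - int (b j0)\<bar> < int p" using a b j0 by (cases "a j0 \<le> b j0") auto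
  ultimately have "int (a j0) - int (b j0) = 0"
    using dvd_imp_le_int[of "int (a j0) - int (b j0)" "int p"] by force
  thus ?thesis by simp
qed

lemma vand_solve:
  fixes J :: "'a set" and xx :: "'a \<Rightarrow> nat"
  assumes p: "prime p" and fin: "finite J" and cardJ: "card J = L"
    and inj: "inj_on xx J" and lt: "\<forall>j\<in>J. xx j < p"
  shows "\<exists>a. (\<forall>j. a j < p) \<and> (\<forall>m<L. (\<Sum>j\<in>J. a j * xx j ^ m) mod p = v m mod p)"
proof -
  define G where "G a = (\<lambda>m\<in>{..<L}. (\<Sum>j\<in>J. a j * xx j ^ m) mod p)" for a
  define Dom where "Dom = J \<rightarrow>\<^sub>E {..<p}"
  define Cod where "Cod = {..<L} \<rightarrow>\<^sub>E {..<(p::nat)}"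
  have p0: "p > 0" using p prime_gt_0_nat by blast
  have sub: "G ` Dom \<subseteq> Cod" unfolding G_def Dom_def Cod_def using p0 by (auto simp: PiE_iff split: if_splits)
  have inj: "inj_on G Dom"
  proof
    fix a b assume ab: "a \<in> Dom" "b \<in> Dom" "G a = G b"
    have eq: "\<forall>m<L. (\<Sum>j\<in>J. a j * xx j ^ m) mod p = (\<Sum>j\<in>J. b j * xx j ^ m) mod p"
    proof (intro allI impI)
      fix m assume "m < L"
      from fun_cong[OF ab(3), of m] this show "(\<Sum>j\<in>J. a j * xx j ^ m) mod p = (\<Sum>j\<in>J. b j * xx j ^ m) mod p"
        by (simp add: G_def)
    qed
    show "a = b"
    proof (rule PiE_ext[of a J "\<lambda>_. {..<p}"])
      show "a \<in> J \<rightarrow>\<^sub>E {..<p}" "b \<in> J \<rightarrow>\<^sub>E {..<p}" using ab Dom_def by auto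
      fix j assume "j \<in> J"
      thus "a j = b j"
        using vand_inj[OF p fin _ assms(4) lt, where a=a and b=b] ab eq cardJ unfolding Dom_def by auto
    qed
  qed
  have "card (G ` Dom) = card Cod"
    using card_image[OF inj] by (simp add: Dom_def Cod_def card_PiE fin cardJ)
  hence GD: "G ` Dom = Cod" using sub by (intro card_subset_eq) (auto simp: Cod_def finite_PiE)
  have "(\<lambda>m\<in>{..<L}. v m mod p) \<in> Cod" using p0 by (auto simp: Cod_def finite_PiE)
  then obtain a where a: "a \<in> Dom" "G a = (\<lambda>m\<in>{..<L}. v m mod p)" using GD by force
  define a' where "a' j = (if j \<in> J then a j else 0)" for j
  have "\<forall>j. a' j < p" using a(1) p0 by (auto simp: a'_def Dom_def)
  moreover have "\<forall>m<L. (\<Sum>j\<in>J. a' j * xx j ^ m) mod p = v m mod p"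
  proof (intro allI impI)
    fix m assume m: "m < L"
    have "(\<Sum>j\<in>J. a' j * xx j ^ m) = (\<Sum>j\<in>J. a j * xx j ^ m)" by (simp add: a'_def)
    with fun_cong[OF a(2), of m] m show "(\<Sum>j\<in>J. a' j * xx j ^ m) mod p = v m mod p"
      by (simp add: G_def)
  qed
  ultimately show ?thesis by blast
qed

lemma pair_pmf_of_set:
  assumes "finite A" "A \<noteq> {}" "finite B" "B \<noteq> {}"
  shows "pair_pmf (pmf_of_set A) (pmf_of_set B) = pmf_of_set (A \<times> B)"
  by (rule pmf_eqI) (auto simp: pmf_pair assms card_cartesian_product indicator_def)

lemma finite_msg: "finite (msg_space p K L)"
proof -
  define G where "G = {g :: nat \<times> nat \<Rightarrow> nat. \<forall>x. (x \<in> {..<K}\<times>{..<L} \<longrightarrow> g x \<in> {..<p}) \<and> (x \<notin> {..<K}\<times>{..<L} \<longrightarrow> g x = 0)}"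
  have "finite G" unfolding G_def by (intro finite_set_of_finite_funs) auto
  moreover have "msg_space p K L \<subseteq> curry ` G"
  proof
    fix w assume w: "w \<in> msg_space p K L"
    have "case_prod w \<in> G" using w by (auto simp: G_def msg_space_def)
    moreover have "w = curry (case_prod w)" by simp
    ultimately show "w \<in> curry ` G" by blast
  qed
  ultimately show ?thesis by (meson finite_imageI finite_subset)
qed

lemma msg_ne: "(\<lambda>k i. 0) \<in> msg_space p K L" if "p > 0"
  using that by (auto simp: msg_space_def)

definition sw :: "nat \<Rightarrow> nat \<Rightarrow> nat" where
  "sw k i = (if i = 0 then k else if i = k then 0 else i)"

lemma sw_sw[simp]: "sw k (sw k i) = i" by (auto simp: sw_def)

lemma mod1: "(a::nat) < p \<Longrightarrow> b \<le> p \<Longrightarrow> ((a + (p - b)) mod p + b) mod p = a"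
proof -
  assume h: "a < p" "b \<le> p"
  have "((a + (p - b)) mod p + b) mod p = (a + (p - b) + b) mod p" by (simp add: mod_add_left_eq)
  also have "a + (p - b) + b = a + p" using h by simp
  finally show ?thesis using h by simp
qed
lemma mod2: "((s::nat) + t) mod p = t \<Longrightarrow> s < p \<Longrightarrow> t < p \<Longrightarrow> s = 0"
  by (metis (no_types, lifting) add.assoc less_imp_add_positive
    mod_add_left_eq mod_add_self2 mod_less mod_self)
lemma mod3: "(c0::nat) \<le> p \<Longrightarrow> ((y + ((ck + (p - c0)) mod p)) mod p + c0) mod p = (y + ck) mod p"
proof -
  assume h: "c0 \<le> p"
  have "((y + ((ck + (p - c0)) mod p)) mod p + c0) mod p = (y + (ck + (p - c0)) + c0) mod p"
    by (simp add: mod_add_left_eq mod_add_right_eq)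
  also have "y + (ck + (p - c0)) + c0 = (y + ck) + p" using h by simp
  finally show ?thesis by simp
qed
lemma mod4: "(y1::nat) < p \<Longrightarrow> y2 < p \<Longrightarrow> (y1 + d) mod p = (y2 + d) mod p \<Longrightarrow> y1 = y2"
proof -
  assume h: "y1 < p" "y2 < p" "(y1 + d) mod p = (y2 + d) mod p"
  have "(int y1 + int d) mod int p = (int y2 + int d) mod int p"
    using h(3) by (metis of_nat_add of_nat_mod)
  hence "int y1 mod int p = int y2 mod int p" by (simp add: mod_eq_dvd_iff)
  thus ?thesis using h(1,2) by simp
qed

locale pidgen =
  fixes K N M p L :: nat and S :: "nat \<Rightarrow> nat set" and D :: "nat \<Rightarrow> nat"
    and xx :: "nat \<times> nat \<Rightarrow> nat" and J :: "nat \<Rightarrow> (nat \<times> nat) set"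
  assumes p_prime: "prime p"
    and stor: "\<forall>n<N. S n \<subseteq> {..<K} \<and> card (S n) = M"
    and xx_inj: "inj_on xx (SIGMA n:{..<N}. {..<D n})"
    and xx_lt: "\<forall>j\<in>(SIGMA n:{..<N}. {..<D n}). xx j < p"
    and J_sub: "\<forall>k<K. J k \<subseteq> (SIGMA n:{..<N}. {..<D n})"
    and J_card: "\<forall>k<K. card (J k) = L"
    and J_stor: "\<forall>k<K. \<forall>n i. (n,i) \<in> J k \<longrightarrow> k \<in> S n"
begin

definition "C = (SIGMA n:{..<N}. {..<D n})"
definition "Sh = {a :: nat list list. length a = N \<and> (\<forall>n<N. length (a!n) = D n \<and> (\<forall>i<D n. a!n!i < p))}"
definition "phi a m = (\<Sum>(n,i)\<in>C. a!n!i * xx (n,i) ^ m) mod p"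
definition "Y = {a\<in>Sh. \<forall>m<L. phi a m = 0}"
definition "addv a b = map (\<lambda>n. map (\<lambda>i. (a!n!i + b!n!i) mod p) [0..<D n]) [0..<N]"
definition "subv a b = map (\<lambda>n. map (\<lambda>i. (a!n!i + (p - b!n!i)) mod p) [0..<D n]) [0..<N]"
definition "good k v a \<longleftrightarrow> a \<in> Sh \<and> (\<forall>m<L. phi a m = v m mod p) \<and> (\<forall>n<N. k \<notin> S n \<longrightarrow> (\<forall>i<D n. a!n!i = 0))"
definition "cc k v = (SOME a. good k v a)"
definition "ZZ = pmf_of_set (to_nat ` Y)"
definition "AA k n w z = map (\<lambda>i. (from_nat z ! n ! i + cc k (w k) ! n ! i) mod p) [0..<D n]"

lemma p0: "p > 0" using p_prime prime_gt_0_nat by blast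

lemma finC: "finite C" by (simp add: C_def)

lemma addv_Sh: "addv a b \<in> Sh" using p0 by (auto simp: addv_def Sh_def)
lemma subv_Sh: "subv a b \<in> Sh" using p0 by (auto simp: subv_def Sh_def)
lemma addv_nth: "n < N \<Longrightarrow> i < D n \<Longrightarrow> addv a b ! n ! i = (a!n!i + b!n!i) mod p"
  by (simp add: addv_def)
lemma subv_nth: "n < N \<Longrightarrow> i < D n \<Longrightarrow> subv a b ! n ! i = (a!n!i + (p - b!n!i)) mod p"
  by (simp add: subv_def)

lemma phi_cong: "(\<And>n i. n < N \<Longrightarrow> i < D n \<Longrightarrow> a!n!i = b!n!i) \<Longrightarrow> phi a m = phi b m"
  unfolding phi_def by (intro arg_cong[where f="\<lambda>x. x mod p"] sum.cong) (auto simp: C_def)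

lemma phi_lt: "phi a m < p" using p0 by (simp add: phi_def)

lemma mod_sum_mult: "(\<Sum>j\<in>A. (f j mod p) * g j) mod p = (\<Sum>j\<in>A. f j * g j) mod (p::nat)"
proof -
  have "(\<Sum>j\<in>A. (f j mod p) * g j) mod p = (\<Sum>j\<in>A. ((f j mod p) * g j) mod p) mod p"
    by (simp add: mod_sum_eq)
  also have "\<dots> = (\<Sum>j\<in>A. (f j * g j) mod p) mod p" by (simp add: mod_mult_left_eq)
  also have "\<dots> = (\<Sum>j\<in>A. f j * g j) mod p" by (simp add: mod_sum_eq)
  finally show ?thesis .
qed

lemma phi_addv: "phi (addv a b) m = (phi a m + phi b m) mod p"
proof -
  have "phi (addv a b) m = (\<Sum>(n,i)\<in>C. ((a!n!i + b!n!i) mod p) * xx (n,i) ^ m) mod p"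
    unfolding phi_def by (intro arg_cong[where f="\<lambda>x. x mod p"] sum.cong) (auto simp: C_def addv_nth)
  also have "\<dots> = (\<Sum>j\<in>C. ((a!fst j!snd j + b!fst j!snd j) mod p) * xx j ^ m) mod p"
    by (simp add: case_prod_beta)
  also have "\<dots> = (\<Sum>j\<in>C. (a!fst j!snd j + b!fst j!snd j) * xx j ^ m) mod p"
    by (rule mod_sum_mult)
  also have "\<dots> = ((\<Sum>j\<in>C. a!fst j!snd j * xx j ^ m) + (\<Sum>j\<in>C. b!fst j!snd j * xx j ^ m)) mod p"
    by (simp add: sum.distrib algebra_simps)
  also have "\<dots> = (phi a m + phi b m) mod p"
    by (simp add: phi_def case_prod_beta mod_add_eq)
  finally show ?thesis .
qed

lemma Sh_eq: "a \<in> Sh \<Longrightarrow> b \<in> Sh \<Longrightarrow> (\<And>n i. n < N \<Longrightarrow> i < D n \<Longrightarrow> a!n!i = b!n!i) \<Longrightarrow> a = b"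
  unfolding Sh_def by (auto intro!: nth_equalityI)

lemma finite_Sh: "finite Sh"
proof -
  define B where "B = {ys. set ys \<subseteq> {..<p} \<and> length ys \<le> (\<Sum>n<N. D n)}"
  have fB: "finite B" unfolding B_def by (rule finite_lists_length_le) auto
  have "Sh \<subseteq> {xs. set xs \<subseteq> B \<and> length xs \<le> N}"
  proof
    fix a assume a: "a \<in> Sh"
    have "set a \<subseteq> B"
    proof
      fix ys assume "ys \<in> set a"
      then obtain n where n: "n < N" "ys = a!n" using a by (auto simp: Sh_def in_set_conv_nth)
      have "D n \<le> (\<Sum>n<N. D n)" using n(1) by (intro member_le_sum) auto
      thus "ys \<in> B" using a n by (auto simp: Sh_def B_def in_set_conv_nth)
    qed
    thus "a \<in> {xs. set xs \<subseteq> B \<and> length xs \<le> N}" using a by (auto simp: Sh_def)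
  qed
  thus ?thesis using finite_lists_length_le[OF fB] finite_subset by blast
qed

definition "z0 = map (\<lambda>n. replicate (D n) (0::nat)) [0..<N]"

lemma z0_Y: "z0 \<in> Y"
proof -
  have "phi z0 m = 0" for m
    unfolding phi_def by (subst sum.neutral) (auto simp: C_def z0_def)
  thus ?thesis using p0 by (auto simp: Y_def Sh_def z0_def)
qed

lemma finite_Y: "finite Y" using finite_Sh by (simp add: Y_def)

lemma good_ex: assumes "k < K" shows "\<exists>a. good k v a"
proof -
  have fJ: "finite (J k)" using J_sub assms finC finite_subset unfolding C_def by blast
  have injJ: "inj_on xx (J k)" using J_sub assms xx_inj inj_on_subset by blast
  have ltJ: "\<forall>j\<in>J k. xx j < p" using J_sub assms xx_lt by blast
  obtain a where a: "\<forall>j. a j < p" "\<forall>m<L. (\<Sum>j\<in>J k. a j * xx j ^ m) mod p = v m mod p"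
    using vand_solve[OF p_prime fJ _ injJ ltJ] J_card assms by blast
  define vec where "vec = map (\<lambda>n. map (\<lambda>i. if (n,i) \<in> J k then a (n,i) else 0) [0..<D n]) [0..<N]"
  have "vec \<in> Sh" using a(1) p0 by (auto simp: vec_def Sh_def)
  moreover have "\<forall>m<L. phi vec m = v m mod p"
  proof (intro allI impI)
    fix m assume m: "m < L"
    have "phi vec m = (\<Sum>j\<in>C. if j \<in> J k then a j * xx j ^ m else 0) mod p"
      unfolding phi_def by (intro arg_cong[where f="\<lambda>x. x mod p"] sum.cong) (auto simp: C_def vec_def)
    also have "\<dots> = (\<Sum>j\<in>C \<inter> J k. a j * xx j ^ m) mod p" by (simp add: sum.inter_restrict finC)
    also have "C \<inter> J k = J k" using J_sub assms by (auto simp: C_def)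
    finally show "phi vec m = v m mod p" using a(2) m by simp
  qed
  moreover have "\<forall>n<N. k \<notin> S n \<longrightarrow> (\<forall>i<D n. vec!n!i = 0)"
    using J_stor assms by (auto simp: vec_def)
  ultimately show ?thesis unfolding good_def by blast
qed

lemma cc_good: "k < K \<Longrightarrow> good k v (cc k v)"
  unfolding cc_def using good_ex by (rule someI_ex)

lemma answers_eq: "pid_answers N AA k w z = addv (from_nat z) (cc k (w k))"
  by (simp add: pid_answers_def AA_def addv_def)


lemma subv_phi:
  assumes "a \<in> Sh" "b \<in> Sh" "phi a m = phi b m"
  shows "phi (subv a b) m = 0"
proof -
  have "phi a m = phi (addv (subv a b) b) m"
  proof (rule phi_cong)
    fix n i assume ni: "n < N" "i < D n"
    have lt: "a!n!i < p" "b!n!i < p" using assms(1,2) ni by (auto simp: Sh_def)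
    show "a!n!i = addv (subv a b) b ! n ! i"
      by (simp only: addv_nth[OF ni] subv_nth[OF ni] mod1[OF lt(1) less_imp_le[OF lt(2)]])
  qed
  also have "\<dots> = (phi (subv a b) m + phi b m) mod p" by (rule phi_addv)
  finally show ?thesis using assms(3) phi_lt by (metis mod2)
qed

lemma joint_eq: "pid_joint p K L ZZ = pmf_of_set (msg_space p K L \<times> to_nat ` Y)"
proof -
  have "msg_space p K L \<noteq> {}" using msg_ne[OF p0, of K L] by blast
  thus ?thesis
  unfolding pid_joint_def ZZ_def using finite_msg finite_Y z0_Y
  by (intro pair_pmf_of_set) auto
qed

lemma decode:
  assumes "w \<in> msg_space p K L" "z \<in> to_nat ` Y" "k < K" "m < L"
  shows "phi (pid_answers N AA k w z) m = w k m"
proof -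
  have y: "from_nat z \<in> Y" using assms(2) by auto
  have g: "good k (w k) (cc k (w k))" using cc_good assms(3) by blast
  have "phi (pid_answers N AA k w z) m = (phi (from_nat z) m + phi (cc k (w k)) m) mod p"
    by (simp add: answers_eq phi_addv)
  also have "\<dots> = w k m mod p" using y g assms(4) by (simp add: Y_def good_def phi_lt)
  also have "\<dots> = w k m" using assms(1,3,4) by (simp add: msg_space_def)
  finally show ?thesis .
qed

lemma correct:
  assumes "k < K" "x \<in> set_pmf (pid_joint p K L ZZ)" "y \<in> set_pmf (pid_joint p K L ZZ)"
    "pid_answers N AA k (fst x) (snd x) = pid_answers N AA k (fst y) (snd y)"
  shows "fst x k = fst y k"
proof -
  have fT: "finite (msg_space p K L \<times> to_nat ` Y)" using finite_msg finite_Y by auto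
  have neT: "msg_space p K L \<times> to_nat ` Y \<noteq> {}" using msg_ne[OF p0] z0_Y by auto
  have x: "fst x \<in> msg_space p K L" "snd x \<in> to_nat ` Y"
    and y: "fst y \<in> msg_space p K L" "snd y \<in> to_nat ` Y"
    using assms(2,3) fT neT by (auto simp: joint_eq mem_Times_iff)
  show ?thesis
  proof
    fix i show "fst x k i = fst y k i"
    proof (cases "i < L")
      case True
      thus ?thesis using decode[OF x assms(1) True] decode[OF y assms(1) True] assms(4) by simp
    next
      case False
      thus ?thesis using x(1) y(1) by (simp add: msg_space_def)
    qed
  qed
qed

lemma sw_msg: assumes "k < K" "w \<in> msg_space p K L" shows "(\<lambda>i. w (sw k i)) \<in> msg_space p K L"
proof -
  have "sw k i < K \<longleftrightarrow> i < K" for i using assms(1) by (auto simp: sw_def)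
  moreover have "i \<ge> K \<Longrightarrow> sw k i = i" for i using assms(1) by (auto simp: sw_def)
  ultimately show ?thesis using assms(2) unfolding msg_space_def by auto
qed

lemma privacy:
  assumes k: "k < K"
  shows "map_pmf (\<lambda>(w, z). (pid_answers N AA k w z, w k)) (pid_joint p K L ZZ) =
         map_pmf (\<lambda>(w, z). (pid_answers N AA 0 w z, w 0)) (pid_joint p K L ZZ)"
proof -
  have K0: "0 < K" using k by simp
  define T where "T = msg_space p K L \<times> to_nat ` Y"
  have fT: "finite T" using finite_msg finite_Y by (auto simp: T_def)
  have neT: "T \<noteq> {}" using msg_ne[OF p0] z0_Y by (auto simp: T_def)
  define adj where "adj w z = addv (from_nat z) (subv (cc k (w k)) (cc 0 (w k)))" for w z
  define Psi where "Psi = (\<lambda>(w, z). ((\<lambda>i. w (sw k i)), to_nat (adj w z)))"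
  have adjY: "adj w z \<in> Y" if "z \<in> to_nat ` Y" for w z
  proof -
    have y: "from_nat z \<in> Y" using that by auto
    have g1: "good k (w k) (cc k (w k))" and g0: "good 0 (w k) (cc 0 (w k))"
      using cc_good k K0 by blast+
    have "\<forall>m<L. phi (adj w z) m = 0"
    proof (intro allI impI)
      fix m assume m: "m < L"
      have "phi (subv (cc k (w k)) (cc 0 (w k))) m = 0"
        using g1 g0 m by (intro subv_phi) (auto simp: good_def)
      thus "phi (adj w z) m = 0" using y m by (simp add: adj_def phi_addv Y_def)
    qed
    thus ?thesis by (simp add: Y_def adj_def addv_Sh)
  qed
  have sub: "Psi ` T \<subseteq> T"
    using adjY sw_msg[OF k] by (auto simp: Psi_def T_def)
  have inj: "inj_on Psi T"
  proof
    fix x y assume xy: "x \<in> T" "y \<in> T" "Psi x = Psi y"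
    obtain w1 z1 where x: "x = (w1, z1)" by force
    obtain w2 z2 where y: "y = (w2, z2)" by force
    have w: "(\<lambda>i. w1 (sw k i)) = (\<lambda>i. w2 (sw k i))" using xy(3) by (simp add: Psi_def x y)
    have "w1 = w2"
    proof
      fix i show "w1 i = w2 i" using fun_cong[OF w, of "sw k i"] by simp
    qed
    moreover have "adj w1 z1 = adj w2 z2" using xy(3) by (simp add: Psi_def x y)
    moreover have Y1: "from_nat z1 \<in> Y" and Y2: "from_nat z2 \<in> Y" using xy x y by (auto simp: T_def)
    ultimately have eqa: "addv (from_nat z1) (subv (cc k (w1 k)) (cc 0 (w1 k)))
        = addv (from_nat z2) (subv (cc k (w1 k)) (cc 0 (w1 k)))" by (simp add: adj_def)
    have "(from_nat z1 :: nat list list) = from_nat z2"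
    proof (rule Sh_eq)
      show "from_nat z1 \<in> Sh" "from_nat z2 \<in> Sh" using Y1 Y2 by (auto simp: Y_def)
      fix n i assume ni: "n < N" "i < D n"
      have "addv (from_nat z1) (subv (cc k (w1 k)) (cc 0 (w1 k))) ! n ! i
          = addv (from_nat z2) (subv (cc k (w1 k)) (cc 0 (w1 k))) ! n ! i" using eqa by simp
      hence "(from_nat z1 ! n ! i + subv (cc k (w1 k)) (cc 0 (w1 k)) ! n ! i) mod p =
             (from_nat z2 ! n ! i + subv (cc k (w1 k)) (cc 0 (w1 k)) ! n ! i) mod p"
        using ni by (simp add: addv_nth)
      moreover have "from_nat z1 ! n ! i < p" "from_nat z2 ! n ! i < p"
        using Y1 Y2 ni by (auto simp: Y_def Sh_def)
      ultimately show "(from_nat z1 :: nat list list) ! n ! i = (from_nat z2 :: nat list list) ! n ! i"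
        using mod4 by blast
    qed
    moreover have "z1 \<in> to_nat ` Y" "z2 \<in> to_nat ` Y" using xy x y by (auto simp: T_def)
    hence "z1 = to_nat (from_nat z1 :: nat list list)" "z2 = to_nat (from_nat z2 :: nat list list)"
      by auto
    ultimately show "x = y" using x y \<open>w1 = w2\<close> by metis
  qed
  have PsiT: "Psi ` T = T" using endo_inj_surj[OF fT sub inj] .
  have mapPsi: "map_pmf Psi (pmf_of_set T) = pmf_of_set T"
    using map_pmf_of_set_inj[OF inj neT fT] PsiT by simp
  have comp: "(\<lambda>(w, z). (pid_answers N AA 0 w z, w 0)) (Psi x) = (\<lambda>(w, z). (pid_answers N AA k w z, w k)) x"
    if "x \<in> T" for x
  proof -
    obtain w z where x: "x = (w, z)" by force
    have Y1: "from_nat z \<in> Y" using that x by (auto simp: T_def)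
    have g0: "good 0 (w k) (cc 0 (w k))" using cc_good K0 by blast
    have "addv (adj w z) (cc 0 (w k)) = addv (from_nat z) (cc k (w k))"
      unfolding addv_def
    proof (intro map_cong refl)
      fix n i assume "n \<in> set [0..<N]" "i \<in> set [0..<D n]"
      hence ni: "n < N" "i < D n" by auto
      have "cc 0 (w k) ! n ! i < p" using g0 ni by (auto simp: good_def Sh_def)
      thus "(adj w z ! n ! i + cc 0 (w k) ! n ! i) mod p = (from_nat z ! n ! i + cc k (w k) ! n ! i) mod p"
        unfolding adj_def addv_nth[OF ni] subv_nth[OF ni] by (intro mod3 less_imp_le)
    qed
    thus ?thesis by (simp add: x Psi_def answers_eq sw_def)
  qed
  have "map_pmf (\<lambda>(w, z). (pid_answers N AA 0 w z, w 0)) (pmf_of_set T)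
      = map_pmf (\<lambda>(w, z). (pid_answers N AA 0 w z, w 0)) (map_pmf Psi (pmf_of_set T))"
    by (simp add: mapPsi)
  also have "\<dots> = map_pmf ((\<lambda>(w, z). (pid_answers N AA 0 w z, w 0)) \<circ> Psi) (pmf_of_set T)"
    by (simp add: pmf.map_comp)
  also have "\<dots> = map_pmf (\<lambda>(w, z). (pid_answers N AA k w z, w k)) (pmf_of_set T)"
    using comp fT neT by (intro map_pmf_cong) auto
  finally show ?thesis by (simp add: joint_eq T_def)
qed

theorem scheme: "pid_scheme K N M p L S ZZ AA D"
  unfolding pid_scheme_def
proof (intro conjI)
  show "prime p" by (rule p_prime)
  show "\<forall>n<N. S n \<subseteq> {..<K} \<and> card (S n) = M" by (rule stor)
  show "\<forall>k<K. \<forall>n<N. \<forall>w w' z. (\<forall>j\<in>S n. w j = w' j) \<longrightarrow> AA k n w z = AA k n w' z"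
  proof (intro allI impI)
    fix k n :: nat and w w' :: "nat \<Rightarrow> nat \<Rightarrow> nat" and z :: nat assume k: "k < K" and n: "n < N" and ww: "\<forall>j\<in>S n. w j = w' j"
    show "AA k n w z = AA k n w' z"
    proof (cases "k \<in> S n")
      case True thus ?thesis using ww by (simp add: AA_def)
    next
      case False
      have "good k (w k) (cc k (w k))" "good k (w' k) (cc k (w' k))" using cc_good k by blast+
      thus ?thesis using False n unfolding AA_def good_def by (intro map_cong) auto
    qed
  qed
  show "\<forall>k<K. \<forall>n<N. \<forall>w z. length (AA k n w z) = D n \<and> (\<forall>x\<in>set (AA k n w z). x < p)"
    using p0 by (auto simp: AA_def)
  show "\<forall>k<K. \<forall>x\<in>set_pmf (pid_joint p K L ZZ). \<forall>y\<in>set_pmf (pid_joint p K L ZZ).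
         pid_answers N AA k (fst x) (snd x) = pid_answers N AA k (fst y) (snd y)
           \<longrightarrow> fst x k = fst y k"
    using correct by blast
  show "\<forall>k<K. map_pmf (\<lambda>(w, z). (pid_answers N AA k w z, w k)) (pid_joint p K L ZZ) =
             map_pmf (\<lambda>(w, z). (pid_answers N AA 0 w z, w 0)) (pid_joint p K L ZZ)"
    using privacy by blast
qed

end


lemma mod_inj_add: "(t1::nat) < m \<Longrightarrow> t2 < m \<Longrightarrow> (c + t1) mod m = (c + t2) mod m \<Longrightarrow> t1 = t2"
proof -
  assume h: "t1 < m" "t2 < m" "(c + t1) mod m = (c + t2) mod m"
  have "(int c + int t1) mod int m = (int c + int t2) mod int m"
    using h(3) by (metis of_nat_add of_nat_mod)
  hence "int t1 mod int m = int t2 mod int m" by (simp add: mod_eq_dvd_iff)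
  thus ?thesis using h(1,2) by simp
qed

lemma div_strict: "(a::nat) + M \<le> b \<Longrightarrow> M > 0 \<Longrightarrow> a div M < b div M"
proof -
  assume h: "a + M \<le> b" "M > 0"
  have "a div M < (a + M) div M" using h(2) by simp
  also have "\<dots> \<le> b div M" using h(1) by (rule div_le_mono)
  finally show ?thesis .
qed

theorem theorem3:
  fixes K N M :: nat
  assumes "1 \<le> M" and "M \<le> K" and "\<not> M dvd K"
    and "\<lceil>real K / real M\<rceil> < int N"
    and "real N < real K / real (gcd K M)
                  - (real M / real (gcd K M) - 1) * (real_of_int \<lfloor>real K / real M\<rfloor> - 1)"
  shows "pid_capacity K N M \<ge>
    (let l = \<lfloor>(real N - real_of_int \<lfloor>real K / real M\<rfloor> + 1) * real M
               / (real K - (real_of_int \<lfloor>real K / real M\<rfloor> - 1) * real M)\<rfloor>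
     in ereal (real_of_int l /
          (real N + (real_of_int l - 1) * (real_of_int \<lfloor>real K / real M\<rfloor> - 1))))"
proof -
  define f where "f = K div M"
  define K' where "K' = K - (f - 1) * M"
  define N' where "N' = N - (f - 1)"
  define l where "l = N' * M div K'"
  have M0: "M > 0" using assms(1) by simp
  have f1: "f \<ge> 1" unfolding f_def using assms(1,2) div_greater_zero_iff[of K M] by linarith
  have Kdec: "K = f * M + K mod M" by (simp add: f_def)
  have K'eq: "K' = M + K mod M"
  proof -
    have "(f - 1) * M + M = f * M" using f1 by (cases f) auto
    thus ?thesis unfolding K'_def using Kdec by linarith
  qed
  have K'M: "M \<le> K'" "K' < 2 * M" using K'eq M0 by auto
  have fMK1: "(f - 1) * M \<le> K"
  proof -
    have "(f - 1) * M \<le> f * M" by (intro mult_le_mono1) simp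
    also have "\<dots> \<le> K" by (simp add: f_def)
    finally show ?thesis .
  qed
  have fMK: "(f - 1) * M \<le> K" "(f - 1) * M + K' = K" using fMK1 by (simp_all add: K'_def)
  have "real K / real M \<le> real_of_int \<lceil>real K / real M\<rceil>" by (rule le_of_int_ceiling)
  also have "\<dots> < real N" using assms(4) by linarith
  finally have "real K < real N * real M" using M0 by (simp add: divide_less_eq)
  hence KNM: "K < N * M" by (metis of_nat_less_iff of_nat_mult)
  have fN: "f < N"
  proof -
    have "f * M \<le> K" by (simp add: f_def)
    hence "f * M < N * M" using KNM by linarith
    thus ?thesis using M0 by simp
  qed
  have N'2: "N' \<ge> 2" using fN f1 unfolding N'_def by linarith
  have lK: "l * K' \<le> N' * M" unfolding l_def by (rule div_times_less_eq_dividend)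
  have l1: "l \<ge> 1"
  proof -
    have "K' \<le> N' * M" using K'M N'2 by (meson le_trans less_imp_le mult_le_mono1)
    hence "0 < N' * M div K'" using K'M M0 by (simp add: div_greater_zero_iff)
    thus ?thesis by (simp add: l_def)
  qed
  obtain p where p: "prime p" "N * l < p" using bigger_prime by blast
  define S where "S n = (if n < f - 1 then {n*M..<(n+1)*M}
      else (\<lambda>t. (f-1)*M + ((n-(f-1))*M + t) mod K') ` {..<M})" for n
  define D where "D n = (if n < f - 1 then l else 1)" for n
  define xx where "xx j = fst j * l + snd j" for j :: "nat \<times> nat"
  define J where "J k = (if k < (f-1)*M then (\<lambda>i. (k div M, i)) ` {..<l}
      else (\<lambda>q. ((f-1) + (q*K' + (k - (f-1)*M)) div M, 0::nat)) ` {..<l})" for k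
  have Dl: "D n \<le> l" for n using l1 by (simp add: D_def)
  interpret G: pidgen K N M p l S D xx J
  proof
    show "prime p" by (rule p(1))
    show "\<forall>n<N. S n \<subseteq> {..<K} \<and> card (S n) = M"
    proof (intro allI impI conjI)
      fix n assume n: "n < N"
      show "S n \<subseteq> {..<K}"
      proof (cases "n < f - 1")
        case True
        hence "(n+1)*M \<le> (f-1)*M" by (intro mult_le_mono1) simp
        thus ?thesis using True fMK by (auto simp: S_def)
      next
        case False
        have "(f-1)*M + x mod K' < K" for x using fMK K'M M0 by (metis add_less_cancel_left mod_less_divisor less_le_trans)
        thus ?thesis using False by (auto simp: S_def)
      qed
      show "card (S n) = M"
      proof (cases "n < f - 1")
        case True thus ?thesis by (simp add: S_def)
      next
        case False
        have "inj_on (\<lambda>t. (f-1)*M + ((n-(f-1))*M + t) mod K') {..<M}"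
        proof
          fix t1 t2 assume "t1 \<in> {..<M}" "t2 \<in> {..<M}"
            "(f-1)*M + ((n-(f-1))*M + t1) mod K' = (f-1)*M + ((n-(f-1))*M + t2) mod K'"
          thus "t1 = t2" using K'M by (intro mod_inj_add[of t1 K' t2 "(n-(f-1))*M"]) auto
        qed
        thus ?thesis using False by (simp add: S_def card_image)
      qed
    qed
    show "inj_on xx (SIGMA n:{..<N}. {..<D n})"
    proof
      fix a b assume ab: "a \<in> (SIGMA n:{..<N}. {..<D n})" "b \<in> (SIGMA n:{..<N}. {..<D n})" "xx a = xx b"
      obtain n i where a0: "a = (n, i)" "n < N" "i < D n" using ab(1) by blast
      obtain n' i' where b0: "b = (n', i')" "n' < N" "i' < D n'" using ab(2) by blast
      have a: "a = (n, i)" "i < l" using a0 Dl less_le_trans by blast+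
      have b: "b = (n', i')" "i' < l" using b0 Dl less_le_trans by blast+
      have e: "n * l + i = n' * l + i'" using ab(3) a b by (simp add: xx_def)
      have d1: "(n * l + i) div l = n" using a(2) by simp
      have d2: "(n' * l + i') div l = n'" using b(2) by simp
      have "n = n'" using e d1 d2 by simp
      thus "a = b" using e a b by simp
    qed
    show "\<forall>j\<in>(SIGMA n:{..<N}. {..<D n}). xx j < p"
    proof
      fix j assume j: "j \<in> (SIGMA n:{..<N}. {..<D n})"
      obtain n i where ni0: "j = (n, i)" "n < N" "i < D n" using j by blast
      have ni: "j = (n, i)" "n < N" "i < l" using ni0 Dl less_le_trans by blast+
      have "n * l + i < (n + 1) * l" using ni by simp
      also have "\<dots> \<le> N * l" using ni by (intro mult_le_mono1) simp
      finally show "xx j < p" using p(2) ni by (simp add: xx_def)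
    qed
    show "\<forall>k<K. J k \<subseteq> (SIGMA n:{..<N}. {..<D n})"
    proof (intro allI impI)
      fix k assume k: "k < K"
      show "J k \<subseteq> (SIGMA n:{..<N}. {..<D n})"
      proof (cases "k < (f-1)*M")
        case True
        hence "k div M < f - 1" by (simp add: div_less_iff_less_mult M0)
        thus ?thesis using True fN by (auto simp: J_def D_def)
      next
        case False
        define j where "j = k - (f-1)*M"
        have j: "j < K'" using k fMK False by (simp add: j_def)
        have "(q*K' + j) div M < N'" if "q < l" for q
        proof -
          have "q*K' + j < (q+1)*K'" using j by simp
          also have "\<dots> \<le> l * K'" using that by (intro mult_le_mono1) simp
          also have "\<dots> \<le> N' * M" by (rule lK)
          finally show ?thesis by (simp add: div_less_iff_less_mult M0)
        qed
        hence hq: "(f-1) + (q*K' + j) div M < N" if "q < l" for q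
          using that fN unfolding N'_def by fastforce
        have Jk: "J k = (\<lambda>q. ((f-1) + (q*K' + j) div M, 0::nat)) ` {..<l}"
          using False by (simp add: J_def j_def)
        show ?thesis using hq by (auto simp: Jk D_def)
      qed
    qed
    show "\<forall>k<K. card (J k) = l"
    proof (intro allI impI)
      fix k assume k: "k < K"
      show "card (J k) = l"
      proof (cases "k < (f-1)*M")
        case True thus ?thesis by (simp add: J_def card_image inj_on_def)
      next
        case False
        define j where "j = k - (f-1)*M"
        have "inj_on (\<lambda>q. ((f-1) + (q*K' + j) div M, 0::nat)) {..<l}"
        proof
          fix q1 q2 assume "q1 \<in> {..<l}" "q2 \<in> {..<l}"
            and e: "((f-1) + (q1*K' + j) div M, 0::nat) = ((f-1) + (q2*K' + j) div M, 0)"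
          hence e2: "(q1*K' + j) div M = (q2*K' + j) div M" by simp
          show "q1 = q2"
          proof (rule ccontr)
            assume "q1 \<noteq> q2"
            hence "q1 < q2 \<or> q2 < q1" by auto
            thus False
            proof
              assume "q1 < q2"
              hence "(q1+1)*K' \<le> q2*K'" by (intro mult_le_mono1) simp
              hence "q1*K' + K' \<le> q2*K'" by simp
              hence "(q1*K' + j) + M \<le> q2*K' + j" using K'M by linarith
              from div_strict[OF this M0] e2 show False by simp
            next
              assume "q2 < q1"
              hence "(q2+1)*K' \<le> q1*K'" by (intro mult_le_mono1) simp
              hence "q2*K' + K' \<le> q1*K'" by simp
              hence "(q2*K' + j) + M \<le> q1*K' + j" using K'M by linarith
              from div_strict[OF this M0] e2 show False by simp
            qed
          qed
        qed
        thus ?thesis using False by (simp add: J_def j_def card_image)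
      qed
    qed
    show "\<forall>k<K. \<forall>n i. (n,i) \<in> J k \<longrightarrow> k \<in> S n"
    proof (intro allI impI)
      fix k n i assume k: "k < K" and ni: "(n, i) \<in> J k"
      show "k \<in> S n"
      proof (cases "k < (f-1)*M")
        case True
        hence n: "n = k div M" using ni by (auto simp: J_def)
        have "n < f - 1" using True n by (simp add: div_less_iff_less_mult M0)
        moreover have "n * M \<le> k" "k < (n+1)*M"
        proof -
          have e: "k = n * M + k mod M" using n by simp
          have "k mod M < M" using M0 by simp
          thus "n * M \<le> k" "k < (n+1)*M" using e by simp_all
        qed
        ultimately show ?thesis by (simp add: S_def)
      next
        case False
        define j where "j = k - (f-1)*M"
        have j: "j < K'" using k fMK False by (simp add: j_def)
        obtain q where q: "q < l" "n = (f-1) + (q*K' + j) div M" using ni False by (auto simp: J_def j_def)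
        have nf: "\<not> n < f - 1" using q by simp
        define t where "t = (q*K' + j) mod M"
        have t: "t < M" using M0 by (simp add: t_def)
        have "(n - (f-1)) * M + t = q*K' + j" using q by (simp add: t_def)
        hence "((n - (f-1)) * M + t) mod K' = j" using j by simp
        hence "k = (f-1)*M + ((n - (f-1)) * M + t) mod K'" using False j_def by simp
        thus ?thesis using nf t by (auto simp: S_def)
      qed
    qed
  qed
  have sch: "pid_scheme K N M p l S G.ZZ G.AA D" by (rule G.scheme)
  have sumD: "(\<Sum>n<N. D n) = (f - 1) * l + (N - (f - 1))"
  proof -
    have "(\<Sum>n<N. D n) = (\<Sum>n\<in>{0..<f-1}. D n) + (\<Sum>n\<in>{f-1..<N}. D n)"
      using fN by (simp add: lessThan_atLeast0 sum.atLeastLessThan_concat)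
    also have "(\<Sum>n\<in>{0..<f-1}. D n) = (\<Sum>n\<in>{0..<f-1}. l)" by (intro sum.cong) (auto simp: D_def)
    also have "(\<Sum>n\<in>{f-1..<N}. D n) = (\<Sum>n\<in>{f-1..<N}. 1)" by (intro sum.cong) (auto simp: D_def)
    finally show ?thesis by simp
  qed
  have mem: "ereal (real l / real (\<Sum>n<N. D n)) \<in>
      {ereal (real L / real (\<Sum>n<N. D n)) | p L S Z A D. pid_scheme K N M p L S Z A D}"
    using sch by blast
  have fl: "\<lfloor>real K / real M\<rfloor> = int f" unfolding f_def by (rule floor_divide_of_nat_eq)
  have rN': "real N' = real N - real f + 1" using fN f1 by (simp add: N'_def of_nat_diff)
  have rK': "real K' = real K - (real f - 1) * real M" using fMK f1
    by (simp add: K'_def of_nat_diff)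
  have "\<lfloor>(real N - real_of_int \<lfloor>real K / real M\<rfloor> + 1) * real M
               / (real K - (real_of_int \<lfloor>real K / real M\<rfloor> - 1) * real M)\<rfloor> = int l"
  proof -
    have "(real N - real_of_int \<lfloor>real K / real M\<rfloor> + 1) * real M
               / (real K - (real_of_int \<lfloor>real K / real M\<rfloor> - 1) * real M) = real (N' * M) / real K'"
      using rN' rK' fl by simp
    moreover have "\<lfloor>real (N' * M) / real K'\<rfloor> = int (N' * M div K')"
      by (rule floor_divide_of_nat_eq)
    ultimately show ?thesis by (simp only: l_def)
  qed
  moreover have "real N + (real l - 1) * (real f - 1) = real (\<Sum>n<N. D n)"
  proof -
    have "real (\<Sum>n<N. D n) = real ((f - 1) * l) + real N'"
      unfolding sumD N'_def by (simp only: of_nat_add)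
    also have "real ((f - 1) * l) = (real f - 1) * real l" using f1 by (simp add: of_nat_diff)
    finally show ?thesis using rN' by (simp add: algebra_simps)
  qed
  ultimately have val: "(let l = \<lfloor>(real N - real_of_int \<lfloor>real K / real M\<rfloor> + 1) * real M
               / (real K - (real_of_int \<lfloor>real K / real M\<rfloor> - 1) * real M)\<rfloor>
     in ereal (real_of_int l /
          (real N + (real_of_int l - 1) * (real_of_int \<lfloor>real K / real M\<rfloor> - 1))))
     = ereal (real l / real (\<Sum>n<N. D n))"
    using fl by (simp add: Let_def)
  show ?thesis unfolding val pid_capacity_def by (rule Sup_upper[OF mem])
qed

end
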